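(* The transfinite sequence $\langle (T_\alpha,P_\alpha)\rangle_{\alpha\in\mathrm{On}}$ defined by $(T_0,P_0)=((\emptyset,\emptyset),(\emptyset,\emptyset))$, $(T_{\beta+1},P_{\beta+1})=\Gamma_{\mathscr{TP}}(T_\beta,P_\beta)$ and $(T_\lambda,P_\lambda)=\bigcup_{\beta<\lambda}(T_\beta,P_\beta)$ for limit $\lambda$ reaches a fixed point, i.e. a pair $(T_\infty,P_\infty)$ in the sequence with $\Gamma_{\mathscr{TP}}(T_\infty,P_\infty)=(T_\infty,P_\infty)$; moreover $(T_\infty,P_\infty)$ is the least fixed point of $\Gamma_{\mathscr{TP}}$ with respect to the componentwise inclusion order.
   Context: Language. Let $\mathcal L_{\mathbb N}$ be the language of first-order Peano arithmetic and $\mathcal L=\mathcal L_{\mathbb N}\cup\{\mathrm T,\mathrm P\}$ with unary predicates $\mathrm T,\mathrm P$. $\mathcal L$-formulas are in Tait style: literals are $s=t$, $s\neq t$, $\mathrm Tt$, $\neg\mathrm Tt$, $\mathrm Pt$, $\neg\mathrm Pt$; formulas are built from literals by $\wedge,\vee,\forall,\exists$; negation of an arbitrary formula is defined by De Morgan dualities with $\neg\neg\varphi:=\varphi$. A standard Gödel numbering is fixed; $\#e$ is the code of $e$, $\ulcorner e\urcorner$ the numeral of $\#e$, $\mathrm{val}(t)$ the value of a closed term $t$, $\dot\neg$ the primitive recursive function with $\dot\neg(\#\varphi)=\#\neg\varphi$; $\mathrm T\varphi,\mathrm P\varphi$ abbreviate $\mathrm T\ulcorner\varphi\urcorner,\mathrm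 P\ulcorner\varphi\urcorner$. Semantics. A partial model is $(\mathbb N,T,P)$ with $\mathbb N$ the standard model and $T=(T^+,T^-)$, $P=(P^+,P^-)$ pairs of subsets of $\omega$. Strong Kleene satisfaction $\models_{SK}$: arithmetic literals evaluated in $\mathbb N$; $\mathrm Tt$ satisfied iff $\mathrm{val}(t)\in T^+$, $\neg\mathrm Tt$ iff $\mathrm{val}(t)\in T^-$, likewise for $\mathrm P$ with $P^\pm$; conjunction iff both, disjunction iff at least one, $\forall x\varphi(x)$ iff all numeral instances, $\exists x\varphi(x)$ iff some numeral instance. Base paradoxicality. $\mathrm{PA}[\mathrm{SK}]$ is the two-sided sequent calculus for Strong Kleene logic with identity in $\mathcal L$ (initial sequents $\varphi\Rightarrow\varphi$, cut, weakening, the rule from $\Gamma\Rightarrow\Delta,\varphi$ infer $\neg\varphi,\Gamma\Rightarrow\Delta$, usual rules for $\wedge,\vee,\forall,\exists$, reflexivity $\Rightarrow t=t$, replacement from $\Gamma\Rightarrow\Delta,\varphi(t)$ infer $\Gamma\Rightarrow\Delta,s\neq t,\varphi(s)$) plus the initial sequents of Peano arithmetic and the induction rule for all $\mathcal L$-formulas. A sentence $\varphi$ is base paradoxical iff $\mathrm{PA}[\mathrm{SK}]$ derives $\varphi\Leftrightarrow\neg\mathrm T\varphi$ and $\neg\varphi\Leftrightarrow\mathrm T\varphi$ (where $\Leftrightarrow$ denotes derivability of both sequents). $B(x)$ is an $\mathcal L_{\mathbb N}$-formula defining in $\mathbb N$ the set of codes of base paradoxical sentences, and $\Pi(x):=B(x)\vee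 B(\dot\neg x)$. Jump. Let $\mathscr P(x)$ be the $\mathcal L$-formula which is the disjunction of: (1) $x$ codes a sentence and $\Pi(x)$; (2) $x$ codes a sentence $\mathrm Tt$ ($t$ a closed term) and $\mathrm P(\mathrm{val}(t))$; (3) $x$ codes a sentence $\neg\mathrm Tt$ and $\mathrm P(\mathrm{val}(t))$; (4) $x$ codes a sentence $\psi\wedge\theta$ and $(\mathrm P\psi\wedge\mathrm P\theta)\vee(\mathrm T\psi\wedge\mathrm P\theta)\vee(\mathrm T\theta\wedge\mathrm P\psi)$; (5) $x$ codes a sentence $\psi\vee\theta$ and $(\mathrm P\psi\wedge\mathrm P\theta)\vee(\neg\mathrm T\psi\wedge\mathrm P\theta)\vee(\neg\mathrm T\theta\wedge\mathrm P\psi)$; (6) $x$ codes a sentence $\forall v\psi$ and $\exists y\,\mathrm P\psi(\dot y)\wedge\forall y(\mathrm P\psi(\dot y)\vee\mathrm T\psi(\dot y))$; (7) $x$ codes a sentence $\exists v\psi$ and $\exists y\,\mathrm P\psi(\dot y)\wedge\forall y(\mathrm P\psi(\dot y)\vee\neg\mathrm T\psi(\dot y))$; here $\psi(\dot y)$ is the code of the result of substituting the numeral of $y$ for $v$. Write $\mathscr P(\varphi)$ for $\mathscr P(\ulcorner\varphi\urcorner)$. Define $\Gamma_{\mathscr{TP}}(T,P)=\big((\{\#\varphi:(\mathbb N,T,P)\models_{SK}\varphi\},\{\#\varphi:(\mathbb N,T,P)\models_{SK}\neg\varphi\}),(\{\#\varphi:(\mathbb N,T,P)\models_{SK}\mathscr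 P(\varphi)\},\{\#\varphi:(\mathbb N,T,P)\models_{SK}\varphi\vee\neg\varphi\})\big)$, $\varphi$ ranging over $\mathcal L$-sentences. Order: $(X,Y)\le(X',Y')$ iff $X\subseteq X'$ and $Y\subseteq Y'$; $(T,P)\le(T',P')$ iff $T\le T'$ and $P\le P'$; unions are componentwise. *)

theory Defs
  imports Main "HOL-Library.Nat_Bijection" "HOL-Library.Product_Order"
begin

text \<open>Terms of arithmetic: free variables FV, bound variables BV (de Bruijn
 indices referring to enclosing quantifiers), 0, successor, +, *.\<close>
datatype trm = FV nat | BV nat | Zero | Sc trm | Pl trm trm | Tm trm trm

text \<open>Formulas in Tait style: literals, conjunction, disjunction, quantifiers.
 Quantifiers bind BV 0 in their body.\<close>
datatype form =
    Eq trm trm | Neq trm trm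
  | Tr trm | NTr trm | Pr trm | NPr trm
  | And form form | Or form form
  | All form | Ex form

fun neg :: "form \<Rightarrow> form" where
  "neg (Eq s t) = Neq s t"
| "neg (Neq s t) = Eq s t"
| "neg (Tr t) = NTr t"
| "neg (NTr t) = Tr t"
| "neg (Pr t) = NPr t"
| "neg (NPr t) = Pr t"
| "neg (And a b) = Or (neg a) (neg b)"
| "neg (Or a b) = And (neg a) (neg b)"
| "neg (All a) = Ex (neg a)"
| "neg (Ex a) = All (neg a)"

fun inst_trm :: "nat \<Rightarrow> trm \<Rightarrow> trm \<Rightarrow> trm" where
  "inst_trm k u (FV n) = FV n"
| "inst_trm k u (BV n) = (if n = k then u else BV n)"
| "inst_trm k u Zero = Zero"
| "inst_trm k u (Sc t) = Sc (inst_trm k u t)"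
| "inst_trm k u (Pl s t) = Pl (inst_trm k u s) (inst_trm k u t)"
| "inst_trm k u (Tm s t) = Tm (inst_trm k u s) (inst_trm k u t)"

fun inst_at :: "nat \<Rightarrow> trm \<Rightarrow> form \<Rightarrow> form" where
  "inst_at k u (Eq s t) = Eq (inst_trm k u s) (inst_trm k u t)"
| "inst_at k u (Neq s t) = Neq (inst_trm k u s) (inst_trm k u t)"
| "inst_at k u (Tr t) = Tr (inst_trm k u t)"
| "inst_at k u (NTr t) = NTr (inst_trm k u t)"
| "inst_at k u (Pr t) = Pr (inst_trm k u t)"
| "inst_at k u (NPr t) = NPr (inst_trm k u t)"
| "inst_at k u (And a b) = And (inst_at k u a) (inst_at k u b)"
| "inst_at k u (Or a b) = Or (inst_at k u a) (inst_at k u b)"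
| "inst_at k u (All a) = All (inst_at (Suc k) u a)"
| "inst_at k u (Ex a) = Ex (inst_at (Suc k) u a)"

abbreviation inst :: "trm \<Rightarrow> form \<Rightarrow> form" where
  "inst u a \<equiv> inst_at 0 u a"

text \<open>Local closedness: every bound variable is bound (k = number of enclosing binders).\<close>
fun lc_trm :: "nat \<Rightarrow> trm \<Rightarrow> bool" where
  "lc_trm k (FV n) = True"
| "lc_trm k (BV n) = (n < k)"
| "lc_trm k Zero = True"
| "lc_trm k (Sc t) = lc_trm k t"
| "lc_trm k (Pl s t) = (lc_trm k s \<and> lc_trm k t)"
| "lc_trm k (Tm s t) = (lc_trm k s \<and> lc_trm k t)"

fun lc_form :: "nat \<Rightarrow> form \<Rightarrow> bool" where
  "lc_form k (Eq s t) = (lc_trm k s \<and> lc_trm k t)"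
| "lc_form k (Neq s t) = (lc_trm k s \<and> lc_trm k t)"
| "lc_form k (Tr t) = lc_trm k t"
| "lc_form k (NTr t) = lc_trm k t"
| "lc_form k (Pr t) = lc_trm k t"
| "lc_form k (NPr t) = lc_trm k t"
| "lc_form k (And a b) = (lc_form k a \<and> lc_form k b)"
| "lc_form k (Or a b) = (lc_form k a \<and> lc_form k b)"
| "lc_form k (All a) = lc_form (Suc k) a"
| "lc_form k (Ex a) = lc_form (Suc k) a"

fun fv_trm :: "trm \<Rightarrow> nat set" where
  "fv_trm (FV n) = {n}"
| "fv_trm (BV n) = {}"
| "fv_trm Zero = {}"
| "fv_trm (Sc t) = fv_trm t"
| "fv_trm (Pl s t) = fv_trm s \<union> fv_trm t"
| "fv_trm (Tm s t) = fv_trm s \<union> fv_trm t"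

fun fv_form :: "form \<Rightarrow> nat set" where
  "fv_form (Eq s t) = fv_trm s \<union> fv_trm t"
| "fv_form (Neq s t) = fv_trm s \<union> fv_trm t"
| "fv_form (Tr t) = fv_trm t"
| "fv_form (NTr t) = fv_trm t"
| "fv_form (Pr t) = fv_trm t"
| "fv_form (NPr t) = fv_trm t"
| "fv_form (And a b) = fv_form a \<union> fv_form b"
| "fv_form (Or a b) = fv_form a \<union> fv_form b"
| "fv_form (All a) = fv_form a"
| "fv_form (Ex a) = fv_form a"

definition closed_trm :: "trm \<Rightarrow> bool" where
  "closed_trm t \<longleftrightarrow> lc_trm 0 t \<and> fv_trm t = {}"

definition sentence :: "form \<Rightarrow> bool" where
  "sentence a \<longleftrightarrow> lc_form 0 a \<and> fv_form a = {}"

fun val :: "trm \<Rightarrow> nat" where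
  "val (FV n) = 0"
| "val (BV n) = 0"
| "val Zero = 0"
| "val (Sc t) = Suc (val t)"
| "val (Pl s t) = val s + val t"
| "val (Tm s t) = val s * val t"

fun num :: "nat \<Rightarrow> trm" where
  "num 0 = Zero"
| "num (Suc n) = Sc (num n)"

fun code_trm :: "trm \<Rightarrow> nat" where
  "code_trm (FV n) = prod_encode (0, n)"
| "code_trm (BV n) = prod_encode (1, n)"
| "code_trm Zero = prod_encode (2, 0)"
| "code_trm (Sc t) = prod_encode (3, code_trm t)"
| "code_trm (Pl s t) = prod_encode (4, prod_encode (code_trm s, code_trm t))"
| "code_trm (Tm s t) = prod_encode (5, prod_encode (code_trm s, code_trm t))"

fun code :: "form \<Rightarrow> nat" where
  "code (Eq s t) = prod_encode (0, prod_encode (code_trm s, code_trm t))"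
| "code (Neq s t) = prod_encode (1, prod_encode (code_trm s, code_trm t))"
| "code (Tr t) = prod_encode (2, code_trm t)"
| "code (NTr t) = prod_encode (3, code_trm t)"
| "code (Pr t) = prod_encode (4, code_trm t)"
| "code (NPr t) = prod_encode (5, code_trm t)"
| "code (And a b) = prod_encode (6, prod_encode (code a, code b))"
| "code (Or a b) = prod_encode (7, prod_encode (code a, code b))"
| "code (All a) = prod_encode (8, code a)"
| "code (Ex a) = prod_encode (9, code a)"

definition gn :: "form \<Rightarrow> trm" where
  "gn a = num (code a)"

text \<open>Sequents Gamma => Delta with finite sets of formulas (exchange and
 contraction are implicit).\<close>
inductive PASK :: "form set \<Rightarrow> form set \<Rightarrow> bool" where
  init: "PASK {a} {a}"
| cut: "PASK G (insert a D) \<Longrightarrow> PASK (insert a G) D \<Longrightarrow> PASK G D"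
| weak: "PASK G D \<Longrightarrow> finite G' \<Longrightarrow> finite D' \<Longrightarrow> PASK (G \<union> G') (D \<union> D')"
| negL: "PASK G (insert a D) \<Longrightarrow> PASK (insert (neg a) G) D"
| andL1: "PASK (insert a G) D \<Longrightarrow> PASK (insert (And a b) G) D"
| andL2: "PASK (insert b G) D \<Longrightarrow> PASK (insert (And a b) G) D"
| andR: "PASK G (insert a D) \<Longrightarrow> PASK G (insert b D) \<Longrightarrow> PASK G (insert (And a b) D)"
| orL: "PASK (insert a G) D \<Longrightarrow> PASK (insert b G) D \<Longrightarrow> PASK (insert (Or a b) G) D"
| orR1: "PASK G (insert a D) \<Longrightarrow> PASK G (insert (Or a b) D)"
| orR2: "PASK G (insert b D) \<Longrightarrow> PASK G (insert (Or a b) D)"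
| allL: "lc_trm 0 t \<Longrightarrow> PASK (insert (inst t a) G) D \<Longrightarrow> PASK (insert (All a) G) D"
| allR: "x \<notin> fv_form a \<Longrightarrow> x \<notin> \<Union>(fv_form ` G) \<Longrightarrow> x \<notin> \<Union>(fv_form ` D) \<Longrightarrow>
         PASK G (insert (inst (FV x) a) D) \<Longrightarrow> PASK G (insert (All a) D)"
| exL: "x \<notin> fv_form a \<Longrightarrow> x \<notin> \<Union>(fv_form ` G) \<Longrightarrow> x \<notin> \<Union>(fv_form ` D) \<Longrightarrow>
         PASK (insert (inst (FV x) a) G) D \<Longrightarrow> PASK (insert (Ex a) G) D"
| exR: "lc_trm 0 t \<Longrightarrow> PASK G (insert (inst t a) D) \<Longrightarrow> PASK G (insert (Ex a) D)"
| refl: "lc_trm 0 t \<Longrightarrow> PASK {} {Eq t t}"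
| repl: "lc_trm 0 s \<Longrightarrow> lc_trm 0 t \<Longrightarrow> PASK G (insert (inst t a) D) \<Longrightarrow>
         PASK G (insert (Neq s t) (insert (inst s a) D))"
| pa1: "lc_trm 0 t \<Longrightarrow> PASK {} {Neq (Sc t) Zero}"
| pa2: "lc_trm 0 s \<Longrightarrow> lc_trm 0 t \<Longrightarrow> PASK {Eq (Sc s) (Sc t)} {Eq s t}"
| pa3: "lc_trm 0 s \<Longrightarrow> PASK {} {Eq (Pl s Zero) s}"
| pa4: "lc_trm 0 s \<Longrightarrow> lc_trm 0 t \<Longrightarrow> PASK {} {Eq (Pl s (Sc t)) (Sc (Pl s t))}"
| pa5: "lc_trm 0 s \<Longrightarrow> PASK {} {Eq (Tm s Zero) Zero}"
| pa6: "lc_trm 0 s \<Longrightarrow> lc_trm 0 t \<Longrightarrow> PASK {} {Eq (Tm s (Sc t)) (Pl (Tm s t) s)}"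
| ind: "x \<notin> fv_form a \<Longrightarrow> x \<notin> \<Union>(fv_form ` G) \<Longrightarrow> x \<notin> \<Union>(fv_form ` D) \<Longrightarrow> lc_trm 0 t \<Longrightarrow>
        PASK (insert (inst (FV x) a) G) (insert (inst (Sc (FV x)) a) D) \<Longrightarrow>
        PASK (insert (inst Zero a) G) (insert (inst t a) D)"

definition PASK_iff :: "form \<Rightarrow> form \<Rightarrow> bool" where
  "PASK_iff a b \<longleftrightarrow> PASK {a} {b} \<and> PASK {b} {a}"

definition base_paradoxical :: "form \<Rightarrow> bool" where
  "base_paradoxical a \<longleftrightarrow> sentence a \<and>
     PASK_iff a (neg (Tr (gn a))) \<and> PASK_iff (neg a) (Tr (gn a))"

definition Pi_set :: "nat set" where
  "Pi_set = {code a | a. sentence a \<and> (base_paradoxical a \<or> base_paradoxical (neg a))}"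

type_synonym pmodel = "(nat set \<times> nat set) \<times> (nat set \<times> nat set)"

fun fsize :: "form \<Rightarrow> nat" where
  "fsize (And a b) = Suc (fsize a + fsize b)"
| "fsize (Or a b) = Suc (fsize a + fsize b)"
| "fsize (All a) = Suc (fsize a)"
| "fsize (Ex a) = Suc (fsize a)"
| "fsize _ = 0"

lemma fsize_inst_at[simp]: "fsize (inst_at k u a) = fsize a"
  by (induction a arbitrary: k) auto

text \<open>M = ((T+, T-), (P+, P-)).  Quantifiers via numeral instances.\<close>
function SK :: "pmodel \<Rightarrow> form \<Rightarrow> bool" where
  "SK M (Eq s t) = (val s = val t)"
| "SK M (Neq s t) = (val s \<noteq> val t)"
| "SK M (Tr t) = (val t \<in> fst (fst M))"
| "SK M (NTr t) = (val t \<in> snd (fst M))"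
| "SK M (Pr t) = (val t \<in> fst (snd M))"
| "SK M (NPr t) = (val t \<in> snd (snd M))"
| "SK M (And a b) = (SK M a \<and> SK M b)"
| "SK M (Or a b) = (SK M a \<or> SK M b)"
| "SK M (All a) = (\<forall>n. SK M (inst (num n) a))"
| "SK M (Ex a) = (\<exists>n. SK M (inst (num n) a))"
  by pat_completeness auto
termination by (relation "measure (\<lambda>(M, a). fsize a)") auto

text \<open>Strong Kleene satisfaction of the L-formula script-P applied to the
 numeral of the code of the sentence phi, written out disjunct by disjunct.\<close>
definition SK_P :: "pmodel \<Rightarrow> form \<Rightarrow> bool" where
  "SK_P M a \<longleftrightarrow>
    (let Tp = fst (fst M); Tn = snd (fst M); Pp = fst (snd M) in
      (code a \<in> Pi_set)
    \<or> (\<exists>t. closed_trm t \<and> a = Tr t \<and> val t \<in> Pp)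
    \<or> (\<exists>t. closed_trm t \<and> a = NTr t \<and> val t \<in> Pp)
    \<or> (\<exists>b c. a = And b c \<and>
          ((code b \<in> Pp \<and> code c \<in> Pp) \<or> (code b \<in> Tp \<and> code c \<in> Pp) \<or> (code c \<in> Tp \<and> code b \<in> Pp)))
    \<or> (\<exists>b c. a = Or b c \<and>
          ((code b \<in> Pp \<and> code c \<in> Pp) \<or> (code b \<in> Tn \<and> code c \<in> Pp) \<or> (code c \<in> Tn \<and> code b \<in> Pp)))
    \<or> (\<exists>b. a = All b \<and> (\<exists>y. code (inst (num y) b) \<in> Pp) \<and>
          (\<forall>y. code (inst (num y) b) \<in> Pp \<or> code (inst (num y) b) \<in> Tp))
    \<or> (\<exists>b. a = Ex b \<and> (\<exists>y. code (inst (num y) b) \<in> Pp) \<and>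
          (\<forall>y. code (inst (num y) b) \<in> Pp \<or> code (inst (num y) b) \<in> Tn)))"

definition Gamma_TP :: "pmodel \<Rightarrow> pmodel" where
  "Gamma_TP M =
    (({code a | a. sentence a \<and> SK M a}, {code a | a. sentence a \<and> SK M (neg a)}),
     ({code a | a. sentence a \<and> SK_P M a}, {code a | a. sentence a \<and> SK M (Or a (neg a))}))"

text \<open>The stages (T_alpha, P_alpha) of the transfinite sequence: the empty start,
 closure under successor steps, and unions (componentwise suprema) at limits,
 a limit stage being the union of a chain of earlier stages.\<close>
inductive_set TP_stages :: "pmodel set" where
  zero: "(({}, {}), ({}, {})) \<in> TP_stages"
| succ: "x \<in> TP_stages \<Longrightarrow> Gamma_TP x \<in> TP_stages"
| lim: "Complete_Partial_Order.chain (\<le>) C \<Longrightarrow> \<forall>c\<in>C. c \<in> TP_stages \<Longrightarrow> Sup C \<in> TP_stages"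

end

theory Submission
  imports Defs
begin

lemma SK_mono0: "SK M a \<Longrightarrow> M \<le> M' \<Longrightarrow> SK M' a"
  by (induction M a rule: SK.induct) (auto simp: less_eq_prod_def)

lemma SK_mono:
  assumes "M \<le> M'" shows "SK M a \<Longrightarrow> SK M' a"
  using SK_mono0[of M a M'] assms by blast

lemma SK_P_mono0:
  assumes le: "fst (fst M) \<subseteq> fst (fst M')" "snd (fst M) \<subseteq> snd (fst M')" "fst (snd M) \<subseteq> fst (snd M')"
  and h: "SK_P M a" shows "SK_P M' a"
proof -
  let ?Tp = "fst (fst M)" and ?Tn = "snd (fst M)" and ?Pp = "fst (snd M)"
  let ?Tp' = "fst (fst M')" and ?Tn' = "snd (fst M')" and ?Pp' = "fst (snd M')"
  from h have "code a \<in> Pi_set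
    \<or> (\<exists>t. closed_trm t \<and> a = Tr t \<and> val t \<in> ?Pp)
    \<or> (\<exists>t. closed_trm t \<and> a = NTr t \<and> val t \<in> ?Pp)
    \<or> (\<exists>b c. a = And b c \<and>
          ((code b \<in> ?Pp \<and> code c \<in> ?Pp) \<or> (code b \<in> ?Tp \<and> code c \<in> ?Pp) \<or> (code c \<in> ?Tp \<and> code b \<in> ?Pp)))
    \<or> (\<exists>b c. a = Or b c \<and>
          ((code b \<in> ?Pp \<and> code c \<in> ?Pp) \<or> (code b \<in> ?Tn \<and> code c \<in> ?Pp) \<or> (code c \<in> ?Tn \<and> code b \<in> ?Pp)))
    \<or> (\<exists>b. a = All b \<and> (\<exists>y. code (inst (num y) b) \<in> ?Pp) \<and>
          (\<forall>y. code (inst (num y) b) \<in> ?Pp \<or> code (inst (num y) b) \<in> ?Tp))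
    \<or> (\<exists>b. a = Ex b \<and> (\<exists>y. code (inst (num y) b) \<in> ?Pp) \<and>
          (\<forall>y. code (inst (num y) b) \<in> ?Pp \<or> code (inst (num y) b) \<in> ?Tn))"
    unfolding SK_P_def Let_def by simp
  then have "code a \<in> Pi_set
    \<or> (\<exists>t. closed_trm t \<and> a = Tr t \<and> val t \<in> ?Pp')
    \<or> (\<exists>t. closed_trm t \<and> a = NTr t \<and> val t \<in> ?Pp')
    \<or> (\<exists>b c. a = And b c \<and>
          ((code b \<in> ?Pp' \<and> code c \<in> ?Pp') \<or> (code b \<in> ?Tp' \<and> code c \<in> ?Pp') \<or> (code c \<in> ?Tp' \<and> code b \<in> ?Pp')))
    \<or> (\<exists>b c. a = Or b c \<and>
          ((code b \<in> ?Pp' \<and> code c \<in> ?Pp') \<or> (code b \<in> ?Tn' \<and> code c \<in> ?Pp') \<or> (code c \<in> ?Tn' \<and> code b \<in> ?Pp')))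
    \<or> (\<exists>b. a = All b \<and> (\<exists>y. code (inst (num y) b) \<in> ?Pp') \<and>
          (\<forall>y. code (inst (num y) b) \<in> ?Pp' \<or> code (inst (num y) b) \<in> ?Tp'))
    \<or> (\<exists>b. a = Ex b \<and> (\<exists>y. code (inst (num y) b) \<in> ?Pp') \<and>
          (\<forall>y. code (inst (num y) b) \<in> ?Pp' \<or> code (inst (num y) b) \<in> ?Tn'))"
    apply (elim disjE)
          apply (rule disjI1, assumption)
         apply (rule disjI2, rule disjI1, use le in blast)
        apply (rule disjI2, rule disjI2, rule disjI1, use le in blast)
       apply (rule disjI2, rule disjI2, rule disjI2, rule disjI1, use le in blast)
      apply (rule disjI2, rule disjI2, rule disjI2, rule disjI2, rule disjI1, use le in blast)
     apply (rule disjI2, rule disjI2, rule disjI2, rule disjI2, rule disjI2, rule disjI1, use le in blast)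
    apply (rule disjI2, rule disjI2, rule disjI2, rule disjI2, rule disjI2, rule disjI2, use le in blast)
    done
  then show ?thesis unfolding SK_P_def Let_def by simp
qed
lemma SK_P_mono:
  assumes "M \<le> M'" shows "SK_P M a \<Longrightarrow> SK_P M' a"
  using assms by (auto simp: less_eq_prod_def intro!: SK_P_mono0[of M M' a])

lemma comp_mono: "(\<And>a. P a \<Longrightarrow> Q a) \<Longrightarrow> {code a | a. sentence a \<and> P a} \<subseteq> {code a | a. sentence a \<and> Q a}"
  by blast

lemma Gamma_mono: "monotone (\<le>) (\<le>) Gamma_TP"
proof (rule monotoneI)
  fix M M' :: pmodel assume le: "M \<le> M'"
  have a: "{code a | a. sentence a \<and> SK M a} \<subseteq> {code a | a. sentence a \<and> SK M' a}"
    by (rule comp_mono, rule SK_mono[OF le])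
  have b: "{code a | a. sentence a \<and> SK M (neg a)} \<subseteq> {code a | a. sentence a \<and> SK M' (neg a)}"
    by (rule comp_mono, rule SK_mono[OF le])
  have c: "{code a | a. sentence a \<and> SK_P M a} \<subseteq> {code a | a. sentence a \<and> SK_P M' a}"
    by (rule comp_mono, rule SK_P_mono[OF le])
  have d: "{code a | a. sentence a \<and> SK M (Or a (neg a))} \<subseteq> {code a | a. sentence a \<and> SK M' (Or a (neg a))}"
    by (rule comp_mono, rule SK_mono[OF le])
  show "Gamma_TP M \<le> Gamma_TP M'"
    unfolding Gamma_TP_def less_eq_prod_def fst_conv snd_conv using a b c d by (intro conjI)
qed

lemma iter_stages: "x \<in> ccpo_class.iterates Gamma_TP \<Longrightarrow> x \<in> TP_stages"
proof (induction x rule: ccpo_class.iterates.induct)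
  case (step x) then show ?case by (simp add: TP_stages.succ)
next
  case (Sup M) then show ?case by (intro TP_stages.lim) auto
qed

theorem mainTheorem2:
  shows "\<exists>x \<in> TP_stages. Gamma_TP x = x \<and> (\<forall>y. Gamma_TP y = y \<longrightarrow> x \<le> y)"
proof (intro bexI conjI allI impI)
  show "Gamma_TP (ccpo_class.fixp Gamma_TP) = ccpo_class.fixp Gamma_TP"
    using fixp_unfold[OF Gamma_mono] by simp
  show "ccpo_class.fixp Gamma_TP \<in> TP_stages"
    by (rule iter_stages[OF iterates_fixp[OF Gamma_mono]])
  fix y assume "Gamma_TP y = y"
  then show "ccpo_class.fixp Gamma_TP \<le> y"
    by (intro fixp_lowerbound[OF Gamma_mono]) simp
qed

end
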